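(* For every $T>0$, $$\lim_{\lambda\to\infty}\liminf_{m\to\infty}\mathbb{P}^{(m)}_\sigma\Big(\sup_{s\le T}|x(s)|_{\mathbb{A}_{\mathbb{Q}}}<\lambda\Big)=1.$$
   Context: Fix a real exponent $b>0$ and a sequence $\sigma=(\sigma_p)_{p\in\mathcal P}$ of nonnegative reals indexed by the set $\mathcal P$ of primes with $\sum_p\sigma_p<\infty$. For a prime $p$, $\mathbb{Q}_p$ denotes the $p$-adic numbers with absolute value $|\cdot|_p$ and $\mathbb{Z}_p$ its closed unit ball. Let $G_p\subset\mathbb{Q}_p$ be the set of $p$-adic numbers of the form $\sum_{k<0}a_kp^k$ with $a_k\in\{0,\dots,p-1\}$, only finitely many nonzero; $G_p$ is a set of representatives of $\mathbb{Q}_p/\mathbb{Z}_p$ and is given the group structure of $\mathbb{Q}_p/\mathbb{Z}_p$. Let $X^{(p)}$ be a $G_p$-valued random variable with $\Pr(|X^{(p)}|_p=p^k)=(p^b-1)p^{-kb}$ for every integer $k\ge1$, and, conditionally on $|X^{(p)}|_p=p^k$, uniformly distributed on the finite set $\{x\in G_p:|x|_p=p^k\}$. Let $X^{(p)}_1,X^{(p)}_2,\dots$ be i.i.d. copies of $X^{(p)}$ and $S^{(p)}_n=X^{(p)}_1+\dots+X^{(p)}_n$ (sum in the group $G_p$), $S^{(p)}_0=0$. Put $D_p=\frac{p^b(p-1)}{p^{b+1}-1}\sigma_p$. For an integer $m\ge0$, let $\mathbb{P}^{(m)}_p$ be the law on $D(\mathbb{Q}_p)$ (càdlàg paths $[0,\infty)\to\mathbb{Q}_p$)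 of $t\mapsto p^mS^{(p)}_{\lfloor D_pp^{mb}t\rfloor}$, and $\mathbb{P}^{(m)}_\sigma=\prod_{p}\mathbb{P}^{(m)}_p$ the product measure on $\prod_pD(\mathbb{Q}_p)$ (independent components). For $y=(y_p)\in\prod_p\mathbb{Q}_p$ write $|y|_{\mathbb{A}_{\mathbb{Q}}}=\sup_p|y_p|_p/p$ (the adelic absolute value on $\mathbb{A}_{\mathbb{Q}}=\{y: y_p\in\mathbb{Z}_p\text{ for all but finitely many }p\}$). *)

theory Defs
  imports "HOL-Probability.Probability" "HOL-Computational_Algebra.Primes"
begin

definition padic_abs :: "nat \<Rightarrow> rat \<Rightarrow> real" where
  "padic_abs p q = (if q = 0 then 0 else
     (let (a, d) = quotient_of q in
       real p powi (int (multiplicity (int p) d) - int (multiplicity (int p) a))))"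

text \<open>G_p: the p-adic numbers sum_{k<0} a_k p^k with finitely many nonzero digits,
  identified with the rationals in [0,1) whose denominator is a power of p.
  The group law of Q_p/Z_p is addition modulo 1 (frac).\<close>
definition Gp :: "nat \<Rightarrow> rat set" where
  "Gp p = {q. 0 \<le> q \<and> q < 1 \<and> (\<exists>k::nat. q * of_nat p ^ k \<in> \<int>)}"

definition Gshell :: "nat \<Rightarrow> nat \<Rightarrow> rat set" where
  "Gshell p k = {x \<in> Gp p. padic_abs p x = real p ^ k}"

text \<open>Law of k with Pr(|X|_p = p^k) = (p^b - 1) p^{-kb}, k \<ge> 1.\<close>
definition Kdist :: "real \<Rightarrow> nat \<Rightarrow> nat pmf" where
  "Kdist b p = embed_pmf (\<lambda>k. if k \<ge> 1 then (real p powr b - 1) * real p powr (- (real k * b)) else 0)"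

definition Xpmf :: "real \<Rightarrow> nat \<Rightarrow> rat pmf" where
  "Xpmf b p = bind_pmf (Kdist b p) (\<lambda>k. pmf_of_set (Gshell p k))"

definition Dp :: "real \<Rightarrow> (nat \<Rightarrow> real) \<Rightarrow> nat \<Rightarrow> real" where
  "Dp b \<sigma> p = real p powr b * (real p - 1) / (real p powr (b + 1) - 1) * \<sigma> p"

definition Idx :: "(nat \<times> nat) set" where
  "Idx = {(p, i). prime p \<and> 1 \<le> i}"

definition Omega :: "real \<Rightarrow> (nat \<times> nat \<Rightarrow> rat) measure" where
  "Omega b = PiM Idx (\<lambda>(p, i). measure_pmf (Xpmf b p))"

definition Swalk :: "(nat \<times> nat \<Rightarrow> rat) \<Rightarrow> nat \<Rightarrow> nat \<Rightarrow> rat" where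
  "Swalk \<omega> p n = frac (\<Sum>i\<in>{1..n}. \<omega> (p, i))"

definition path :: "real \<Rightarrow> (nat \<Rightarrow> real) \<Rightarrow> nat \<Rightarrow> (nat \<times> nat \<Rightarrow> rat) \<Rightarrow> nat \<Rightarrow> real \<Rightarrow> rat" where
  "path b \<sigma> m \<omega> p t = of_nat p ^ m * Swalk \<omega> p (nat \<lfloor>Dp b \<sigma> p * real p powr (real m * b) * t\<rfloor>)"

definition adelic_abs :: "(nat \<Rightarrow> rat) \<Rightarrow> ereal" where
  "adelic_abs y = (SUP p\<in>{p. prime p}. ereal (padic_abs p (y p) / real p))"

definition bounded_event :: "real \<Rightarrow> (nat \<Rightarrow> real) \<Rightarrow> nat \<Rightarrow> real \<Rightarrow> real \<Rightarrow> (nat \<times> nat \<Rightarrow> rat) set" where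
  "bounded_event b \<sigma> m T lam =
     {\<omega> \<in> space (Omega b). (SUP s\<in>{0..T}. adelic_abs (\<lambda>p. path b \<sigma> m \<omega> p s)) < ereal lam}"

end

theory Submission
  imports Defs
begin


lemma pps: "product_prob_space (\<lambda>(p, i). measure_pmf (Xpmf b p))"
  unfolding product_prob_space_def product_prob_space_axioms_def product_sigma_finite_def
  by (auto simp: prob_space_measure_pmf split: prod.splits intro: prob_space_imp_sigma_finite)

lemma prob_Omega: "prob_space (Omega b)"
proof -
  interpret product_prob_space "\<lambda>(p, i). measure_pmf (Xpmf b p)" Idx by (rule pps)
  show ?thesis unfolding Omega_def by (rule P.prob_space_axioms)
qed

lemma comp_meas:
  assumes "(p, i) \<in> Idx"
  shows "measure (Omega b) {\<omega> \<in> space (Omega b). P (\<omega> (p, i))} = measure (Xpmf b p) {x. P x}"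
proof -
  interpret product_prob_space "\<lambda>(p, i). measure_pmf (Xpmf b p)" Idx by (rule pps)
  have "emeasure (Omega b) {\<omega> \<in> space (Omega b). \<omega> (p, i) \<in> {x. P x}} = emeasure (Xpmf b p) {x. P x}"
    unfolding Omega_def using emeasure_PiM_Collect_single[OF assms, of "{x. P x}"] by simp
  then show ?thesis by (simp add: measure_def)
qed

lemma sets_Omega: "space (Omega b) = PiE Idx (\<lambda>_. UNIV)"
  unfolding Omega_def space_PiM by (rule PiE_cong) (auto split: prod.splits)



lemma denom_dvd:
  assumes "quotient_of y = (a, d)" and "y * of_nat p ^ j \<in> \<int>"
  shows "d dvd int p ^ j"
proof -
  obtain z where z: "y * of_nat p ^ j = of_int z" using assms(2) Ints_cases by blast
  have d0: "d > 0" using quotient_of_denom_pos[OF assms(1)] .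
  have y: "y = of_int a / of_int d" using quotient_of_div[OF assms(1)] .
  have "of_int a * of_nat p ^ j = (of_int (z * d) :: rat)"
    using z d0 unfolding y by (simp add: field_simps)
  hence "a * int p ^ j = z * d" by (metis of_int_eq_iff of_int_mult of_int_of_nat_eq of_int_power)
  hence "d dvd a * int p ^ j" by (metis dvd_triv_right)
  moreover have "coprime d a" using quotient_of_coprime[OF assms(1)] by (simp add: ac_simps coprime_commute)
  ultimately show ?thesis using coprime_dvd_mult_right_iff by blast
qed

lemma padic_abs_le:
  assumes p: "prime p" and "y * of_nat p ^ j \<in> \<int>"
  shows "padic_abs p y \<le> real p ^ j"
proof (cases "y = 0")
  case True then show ?thesis by (simp add: padic_abs_def)
next
  case False
  obtain a d where ad: "quotient_of y = (a, d)" by (cases "quotient_of y")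
  have dv: "d dvd int p ^ j" using denom_dvd[OF ad assms(2)] .
  have pi: "prime (int p)" using p by simp
  have "multiplicity (int p) d \<le> multiplicity (int p) (int p ^ j)"
    by (rule dvd_imp_multiplicity_le[OF dv]) (use p in auto)
  also have "\<dots> = j" using pi by (simp add: prime_imp_prime_elem)
  finally have m: "multiplicity (int p) d \<le> j" .
  have p1: "real p \<ge> 1" using p prime_gt_0_nat by (simp add: Suc_le_eq)
  have "padic_abs p y = real p powi (int (multiplicity (int p) d) - int (multiplicity (int p) a))"
    using False ad by (simp add: padic_abs_def)
  also have "\<dots> \<le> real p powi int j"
    by (rule power_int_increasing) (use m p1 in auto)
  also have "\<dots> = real p ^ j" by simp
  finally show ?thesis .
qed

lemma shell_int:
  assumes p: "prime p" and k: "k \<ge> 1" and x: "x \<in> Gshell p k"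
  shows "x * of_nat p ^ k \<in> \<int>"
proof -
  from x obtain l where x0: "0 \<le> x" "x < 1" and l: "x * of_nat p ^ l \<in> \<int>"
    and pa: "padic_abs p x = real p ^ k"
    by (auto simp: Gshell_def Gp_def)
  have p1: "real p > 1" using p prime_gt_1_nat by simp
  have xn0: "x \<noteq> 0" using pa p1 by (auto simp: padic_abs_def)
  obtain a d where ad: "quotient_of x = (a, d)" by (cases "quotient_of x")
  have d0: "d > 0" using quotient_of_denom_pos[OF ad] .
  have xe: "x = of_int a / of_int d" using quotient_of_div[OF ad] .
  have dv: "d dvd int p ^ l" using denom_dvd[OF ad l] .
  have pi: "prime (int p)" using p by simp
  obtain e where "e \<le> l" and "normalize d = int p ^ e" using divides_primepow[OF pi dv] by blast
  hence de: "d = int p ^ e" using d0 by simp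
  have "e \<noteq> 0"
  proof
    assume "e = 0"
    hence "x = of_int a" using xe de by simp
    with x0 xn0 show False
      by (metis Ints_of_int frac_eq_0_iff frac_eq)
  qed
  hence "int p dvd d" using de by (simp add: dvd_power)
  moreover have "coprime a d" using quotient_of_coprime[OF ad] .
  ultimately have "\<not> int p dvd a" using pi
    by (metis coprime_common_divisor not_prime_unit)
  hence ma: "multiplicity (int p) a = 0" by (rule not_dvd_imp_multiplicity_0)
  have md: "multiplicity (int p) d = e" using de pi by (simp add: prime_imp_prime_elem)
  have "padic_abs p x = real p ^ e" using xn0 ad ma md by (simp add: padic_abs_def)
  with pa have "real p ^ e = real p ^ k" by simp
  hence "e = k" using p1 by (simp add: power_inject_exp)
  hence "x * of_nat p ^ k = of_int a" using xe de d0 by (simp add: field_simps)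
  thus ?thesis by simp
qed

lemma shell_finite:
  assumes p: "prime p" and k: "k \<ge> 1"
  shows "finite (Gshell p k)"
proof -
  have "Gshell p k \<subseteq> (\<lambda>z. of_int z / of_nat p ^ k) ` {0..int p ^ k}"
  proof
    fix x assume x: "x \<in> Gshell p k"
    obtain z where z: "x * of_nat p ^ k = of_int z" using shell_int[OF p k x] Ints_cases by blast
    have pk: "(of_nat p ^ k :: rat) > 0" using p prime_gt_0_nat by simp
    have x0: "0 \<le> x" "x < 1" using x by (auto simp: Gshell_def Gp_def)
    have "0 \<le> (of_int z :: rat)" using z x0 pk by (metis mult_nonneg_nonneg less_imp_le)
    moreover have "of_int z \<le> (of_nat p ^ k :: rat)" using z x0 pk
      by (metis less_imp_le mult_le_cancel_right1 not_less)
    ultimately have "z \<in> {0..int p ^ k}" by (simp del: of_int_power) (metis of_int_le_iff of_int_of_nat_eq of_int_power)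
    moreover have "x = of_int z / of_nat p ^ k" using z pk by (simp add: field_simps)
    ultimately show "x \<in> (\<lambda>z. of_int z / of_nat p ^ k) ` {0..int p ^ k}" by blast
  qed
  thus ?thesis by (rule finite_subset) simp
qed

lemma shell_nonempty:
  assumes p: "prime p" and k: "k \<ge> 1"
  shows "Gshell p k \<noteq> {}"
proof -
  define y :: rat where "y = 1 / of_nat p ^ k"
  have p1: "p > 1" using p prime_gt_1_nat by simp
  have pk: "(of_nat p ^ k :: rat) > 1" using p1 k by simp
  have "y = Fract 1 (int p ^ k)" unfolding y_def by (simp add: Fract_of_int_quotient)
  hence q: "quotient_of y = (1, int p ^ k)" using p1
    by (simp add: quotient_of_Fract)
  have pi: "prime (int p)" using p by simp
  have p0: "0 < p" using p1 by simp
  have "y * of_nat p ^ k = 1" unfolding y_def using pk p0 by simp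
  moreover have "y < 1" unfolding y_def using pk by (simp add: divide_less_eq)
  moreover have "0 \<le> y" unfolding y_def by simp
  ultimately have "y \<in> Gp p" unfolding Gp_def by (metis (mono_tags, lifting) Ints_1 mem_Collect_eq)
  moreover have "y \<noteq> 0" using pk p0 unfolding y_def by simp
  hence "padic_abs p y = real p ^ k" using q pi by (simp add: padic_abs_def prime_imp_prime_elem)
  ultimately show ?thesis unfolding Gshell_def by blast
qed



lemma Kf_eq:
  assumes "real p > 1"
  shows "real p powr (- (real k * b)) = (real p powr (-b)) ^ k"
proof -
  have "(real p powr (-b)) ^ k = (real p powr (-b)) powr real k"
    using assms by (simp add: powr_realpow)
  also have "\<dots> = real p powr (- (real k * b))" by (simp add: powr_powr mult.commute)
  finally show ?thesis by simp
qed

lemma Kdist_pmf: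
  assumes p: "real p > 1" and b: "b > 0"
  shows "pmf (Kdist b p) k = (if k \<ge> 1 then (real p powr b - 1) * (real p powr (-b)) ^ k else 0)"
proof -
  define q where "q = real p powr b"
  define r where "r = real p powr (-b)"
  have "real p powr 0 < real p powr b" using p b by (simp only: powr_less_cancel_iff)
  hence q1: "q > 1" unfolding q_def using p by simp
  have qr: "q * r = 1" unfolding q_def r_def using p by (simp add: powr_add[symmetric])
  have rq: "r = 1 / q" using qr q1 by (simp add: field_simps)
  have r0: "r > 0" "r < 1" using rq q1 by auto
  define f where "f = (\<lambda>k::nat. if k \<ge> 1 then (real p powr b - 1) * real p powr (- (real k * b)) else 0)"
  have fe: "f = (\<lambda>k. if k \<ge> 1 then (q - 1) * r ^ k else 0)"
    unfolding f_def q_def r_def using Kf_eq[OF p] by auto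
  have nn: "\<And>k. f k \<ge> 0" unfolding fe using q1 r0 by auto
  have "(\<lambda>k. r ^ k) sums (1 / (1 - r))" using geometric_sums[of r] r0 by simp
  hence "(\<lambda>k. r * r ^ k) sums (r * (1 / (1 - r)))" by (rule sums_mult)
  hence "(\<lambda>k. (if Suc k \<ge> 1 then (q - 1) * r ^ Suc k else 0)) sums ((q - 1) * (r * (1 / (1 - r))))"
    using sums_mult[of "\<lambda>k. r * r ^ k" "r * (1 / (1 - r))" "q - 1"] by simp
  hence "f sums ((q - 1) * (r * (1 / (1 - r))) + f 0)" unfolding fe
    by (subst sums_Suc_iff[symmetric]) simp
  moreover have "(q - 1) * (r * (1 / (1 - r))) + f 0 = 1"
    unfolding fe using qr r0 q1 by (simp add: field_simps)
  ultimately have fs: "f sums 1" by simp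
  have "(\<integral>\<^sup>+x. ennreal (f x) \<partial>count_space UNIV) = (\<Sum>x. ennreal (f x))"
    by (rule nn_integral_count_space_nat)
  also have "\<dots> = ennreal (\<Sum>x. f x)"
    using fs nn by (intro suminf_ennreal2) (auto simp: sums_iff)
  also have "\<dots> = 1" using fs by (simp add: sums_iff)
  finally have "(\<integral>\<^sup>+x. ennreal (f x) \<partial>count_space UNIV) = 1" .
  hence "pmf (embed_pmf f) k = f k" using nn by (intro pmf_embed_pmf) auto
  thus ?thesis unfolding Kdist_def f_def[symmetric] using fe by (simp add: q_def r_def)
qed

lemma Kdist_set:
  assumes p: "real p > 1" and b: "b > 0" and k: "k \<in> set_pmf (Kdist b p)"
  shows "k \<ge> 1"
  using k Kdist_pmf[OF p b, of k] by (auto simp: set_pmf_eq split: if_splits)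

lemma Kdist_tail:
  assumes p: "real p > 1" and b: "b > 0"
  shows "measure (Kdist b p) {k. k > j} = (real p powr (-b)) ^ j"
proof -
  define q where "q = real p powr b"
  define r where "r = real p powr (-b)"
  have qr: "q * r = 1" unfolding q_def r_def using p by (simp add: powr_add[symmetric])
  have S: "(\<Sum>k\<in>{..j}. pmf (Kdist b p) k) = 1 - r ^ j"
  proof (induction j)
    case 0 then show ?case by (simp add: Kdist_pmf[OF p b])
  next
    case (Suc j)
    have "(\<Sum>k\<in>{..Suc j}. pmf (Kdist b p) k) = 1 - r ^ j + (q - 1) * r ^ Suc j"
      using Suc by (simp add: Kdist_pmf[OF p b] q_def r_def)
    also have "\<dots> = 1 - r ^ Suc j"
    proof -
      have "(q - 1) * r ^ Suc j = r ^ j * (q * r) - r ^ Suc j" by (simp add: algebra_simps)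
      thus ?thesis using qr by simp
    qed
    finally show ?case .
  qed
  have "{k. k > j} = UNIV - {..j}" by auto
  hence "measure (Kdist b p) {k. k > j} = 1 - measure (Kdist b p) {..j}"
    using measure_pmf.prob_compl[of "{..j}" "Kdist b p"] by simp
  also have "\<dots> = r ^ j" using S by (simp add: measure_measure_pmf_finite)
  finally show ?thesis unfolding r_def .
qed



lemma X_tail:
  assumes p: "prime p" and b: "b > 0"
  shows "measure (Xpmf b p) {x. x * of_nat p ^ j \<notin> \<int>} \<le> (real p powr (-b)) ^ j"
proof -
  let ?A = "{x. x * of_nat p ^ j \<notin> \<int>}"
  have p1: "real p > 1" using p prime_gt_1_nat by simp
  have "emeasure (Xpmf b p) ?A = (\<integral>\<^sup>+k. emeasure (pmf_of_set (Gshell p k)) ?A \<partial>Kdist b p)"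
    unfolding Xpmf_def by simp
  also have "\<dots> \<le> (\<integral>\<^sup>+k. indicator {k. k > j} k \<partial>Kdist b p)"
  proof (rule nn_integral_mono_AE)
    show "AE k in measure_pmf (Kdist b p). emeasure (pmf_of_set (Gshell p k)) ?A \<le> indicator {k. k > j} k"
      unfolding AE_measure_pmf_iff
    proof
      fix k assume "k \<in> set_pmf (Kdist b p)"
      hence k: "k \<ge> 1" using Kdist_set[OF p1 b] by blast
      show "emeasure (pmf_of_set (Gshell p k)) ?A \<le> indicator {k. k > j} k"
      proof (cases "k > j")
        case True then show ?thesis by (simp add: measure_pmf.emeasure_le_1)
      next
        case False
        have "set_pmf (pmf_of_set (Gshell p k)) \<inter> ?A = {}"
        proof -
          { fix x assume x: "x \<in> Gshell p k"
            obtain z where z: "x * of_nat p ^ k = of_int z" using shell_int[OF p k x] Ints_cases by blast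
            have pj: "(of_nat p ^ j :: rat) = of_nat p ^ k * of_nat p ^ (j - k)"
              using False by (simp flip: power_add)
            have "x * of_nat p ^ j = of_int (z * int p ^ (j - k))"
              unfolding pj mult.assoc[symmetric] z by simp
            hence "x * of_nat p ^ j \<in> \<int>" by simp }
          thus ?thesis using shell_finite[OF p k] shell_nonempty[OF p k] by auto
        qed
        hence "measure (pmf_of_set (Gshell p k)) ?A = 0" by (simp add: measure_pmf_zero_iff)
        hence "emeasure (pmf_of_set (Gshell p k)) ?A = 0" by (simp add: measure_pmf.emeasure_eq_measure)
        thus ?thesis by simp
      qed
    qed
  qed
  also have "\<dots> = emeasure (Kdist b p) {k. k > j}" by simp
  also have "\<dots> = ennreal ((real p powr (-b)) ^ j)"
    using Kdist_tail[OF p1 b, of j] by (simp add: measure_pmf.emeasure_eq_measure)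
  finally show ?thesis
    by (simp add: measure_pmf.emeasure_eq_measure)
qed


lemma meas_coord:
  assumes "(p, i) \<in> Idx"
  shows "(\<lambda>\<omega>. \<omega> (p, i)) \<in> measurable (Omega b) (count_space UNIV)"
proof -
  have "(\<lambda>\<omega>. \<omega> (p, i)) \<in> measurable (Omega b) (measure_pmf (Xpmf b p))"
    unfolding Omega_def using measurable_component_singleton[OF assms, of "\<lambda>(p, i). measure_pmf (Xpmf b p)"]
    by simp
  moreover have "measurable (Omega b) (count_space UNIV) = measurable (Omega b) (measure_pmf (Xpmf b p))"
    by (rule measurable_cong_sets[OF refl]) (simp add: sets_measure_pmf)
  ultimately show ?thesis by (simp only:)
qed

lemma meas_plus:
  fixes f g :: "'a \<Rightarrow> rat"
  assumes "f \<in> measurable M (count_space UNIV)" "g \<in> measurable M (count_space UNIV)"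
  shows "(\<lambda>x. f x + g x) \<in> measurable M (count_space UNIV)"
proof -
  have "(\<lambda>x. (f x, g x)) \<in> measurable M (count_space UNIV \<Otimes>\<^sub>M count_space UNIV)"
    using assms by (rule measurable_Pair)
  hence 1: "(\<lambda>x. (f x, g x)) \<in> measurable M (count_space (UNIV \<times> UNIV))"
    by (subst (asm) pair_measure_countable) auto
  have 2: "(\<lambda>(a, b). a + b) \<in> measurable (count_space (UNIV \<times> UNIV)) (count_space (UNIV :: rat set))"
    by (simp only: measurable_count_space_eq1) auto
  show ?thesis using measurable_compose[OF 1 2] by simp
qed
lemma meas_sum:
  assumes "prime p"
  shows "(\<lambda>\<omega>. (\<Sum>i\<in>{1..n}. \<omega> (p, i)) :: rat) \<in> measurable (Omega b) (count_space UNIV)"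
proof (induction n)
  case 0
  have e: "(\<lambda>\<omega>::nat \<times> nat \<Rightarrow> rat. \<Sum>i\<in>{1..0::nat}. \<omega> (p, i)) = (\<lambda>\<omega>. 0)" by simp
  show ?case unfolding e by (rule measurable_const) (simp only: space_count_space UNIV_I)
next
  case (Suc n)
  have "(p, Suc n) \<in> Idx" using assms by (simp add: Idx_def)
  from meas_plus[OF Suc meas_coord[OF this]] show ?case by (simp add: add.commute)
qed

lemma meas_count_borel:
  fixes g :: "'b \<Rightarrow> ereal"
  assumes "f \<in> measurable M (count_space UNIV)"
  shows "(\<lambda>x. g (f x)) \<in> borel_measurable M"
proof -
  have "g \<in> measurable (count_space UNIV) borel" by (simp only: measurable_count_space_eq1) auto
  thus ?thesis by (rule measurable_compose[OF assms])
qed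

lemma pred_coord:
  assumes "(p, i) \<in> Idx"
  shows "{\<omega> \<in> space (Omega b). P (\<omega> (p, i))} \<in> sets (Omega b)"
proof -
  have "(\<lambda>\<omega>. \<omega> (p, i)) -` {x. P x} \<inter> space (Omega b) \<in> sets (Omega b)"
    by (rule measurable_sets[OF meas_coord[OF assms]]) (simp only: sets_count_space Pow_UNIV UNIV_I)
  moreover have "(\<lambda>\<omega>. \<omega> (p, i)) -` {x. P x} \<inter> space (Omega b) = {\<omega> \<in> space (Omega b). P (\<omega> (p, i))}"
    by auto
  ultimately show ?thesis by (simp only:)
qed

lemma bounded_event_alt:
  "bounded_event b \<sigma> m T lam = {\<omega> \<in> space (Omega b).
     (SUP p\<in>{p. prime p}. SUP n\<in>(\<lambda>s. nat \<lfloor>Dp b \<sigma> p * real p powr (real m * b) * s\<rfloor>) ` {0..T}.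
        ereal (padic_abs p (of_nat p ^ m * Swalk \<omega> p n) / real p)) < ereal lam}"
proof -
  have "\<And>\<omega>. (SUP s\<in>{0..T}. adelic_abs (\<lambda>p. path b \<sigma> m \<omega> p s)) =
     (SUP p\<in>{p. prime p}. SUP n\<in>(\<lambda>s. nat \<lfloor>Dp b \<sigma> p * real p powr (real m * b) * s\<rfloor>) ` {0..T}.
        ereal (padic_abs p (of_nat p ^ m * Swalk \<omega> p n) / real p))"
    unfolding adelic_abs_def path_def
    by (subst SUP_commute) (simp add: image_image)
  thus ?thesis unfolding bounded_event_def by simp
qed

lemma bounded_event_sets: "bounded_event b \<sigma> m T lam \<in> sets (Omega b)"
proof -
  have "(\<lambda>\<omega>. SUP p\<in>{p. prime p}. SUP n\<in>(\<lambda>s. nat \<lfloor>Dp b \<sigma> p * real p powr (real m * b) * s\<rfloor>) ` {0..T}.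
        ereal (padic_abs p (of_nat p ^ m * Swalk \<omega> p n) / real p)) \<in> borel_measurable (Omega b)"
  proof (rule borel_measurable_SUP)
    fix p :: nat assume "p \<in> {p. prime p}"
    hence p: "prime p" by simp
    show "(\<lambda>\<omega>. SUP n\<in>(\<lambda>s. nat \<lfloor>Dp b \<sigma> p * real p powr (real m * b) * s\<rfloor>) ` {0..T}.
        ereal (padic_abs p (of_nat p ^ m * Swalk \<omega> p n) / real p)) \<in> borel_measurable (Omega b)"
    proof (rule borel_measurable_SUP)
      fix n
      show "(\<lambda>\<omega>. ereal (padic_abs p (of_nat p ^ m * Swalk \<omega> p n) / real p)) \<in> borel_measurable (Omega b)"
        unfolding Swalk_def
        by (rule meas_count_borel[OF meas_sum[OF p], of "\<lambda>y. ereal (padic_abs p (of_nat p ^ m * frac y) / real p)"])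
    qed simp
  qed simp
  hence "{\<omega> \<in> space (Omega b). (SUP p\<in>{p. prime p}. SUP n\<in>(\<lambda>s. nat \<lfloor>Dp b \<sigma> p * real p powr (real m * b) * s\<rfloor>) ` {0..T}.
        ereal (padic_abs p (of_nat p ^ m * Swalk \<omega> p n) / real p)) < ereal lam} \<in> sets (Omega b)"
    by measurable
  thus ?thesis by (simp add: bounded_event_alt)
qed



lemma Dp_bounds:
  assumes p: "prime p" and b: "b > 0" and s: "\<sigma> p \<ge> 0"
  shows "0 \<le> Dp b \<sigma> p" "Dp b \<sigma> p \<le> \<sigma> p"
proof -
  define q where "q = real p powr b"
  have p1: "real p > 1" using p prime_gt_1_nat by simp
  have "real p powr 0 < real p powr b" using p1 b by (simp only: powr_less_cancel_iff)
  hence q1: "q > 1" unfolding q_def using p1 by simp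
  have pb: "real p powr (b + 1) = q * real p" unfolding q_def using p1 by (simp add: powr_add)
  have den: "q * real p - 1 > 0" using q1 p1 by (smt (verit) mult_less_cancel_left1 mult_pos_pos)
  have c0: "0 \<le> q * (real p - 1) / (q * real p - 1)" using den q1 p1 by simp
  have c1: "q * (real p - 1) / (q * real p - 1) \<le> 1" using den q1 by (simp add: divide_le_eq algebra_simps)
  have D: "Dp b \<sigma> p = q * (real p - 1) / (q * real p - 1) * \<sigma> p" unfolding Dp_def pb q_def by simp
  show "0 \<le> Dp b \<sigma> p" unfolding D by (rule mult_nonneg_nonneg[OF c0 s])
  show "Dp b \<sigma> p \<le> \<sigma> p" unfolding D using mult_right_mono[OF c1 s] by simp
qed

lemma exp_choice:
  assumes p1: "real p > 1" and L: "L \<ge> 1"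
  shows "real p ^ nat \<lfloor>log (real p) L\<rfloor> \<le> L" "L < real p ^ (nat \<lfloor>log (real p) L\<rfloor> + 1)"
proof -
  define e where "e = nat \<lfloor>log (real p) L\<rfloor>"
  have lg: "log (real p) L \<ge> 0" using p1 L by simp
  have re: "real e = of_int \<lfloor>log (real p) L\<rfloor>" unfolding e_def using lg by simp
  have pl: "real p powr (log (real p) L) = L" using p1 L by simp
  have "real p ^ e = real p powr real e" using p1 by (simp add: powr_realpow)
  also have "\<dots> \<le> real p powr (log (real p) L)" using p1 re by (simp add: of_int_floor_le)
  finally show "real p ^ e \<le> L" using pl unfolding e_def by simp
  have "real p ^ (e + 1) = real p powr real (e + 1)" by (subst powr_realpow) (use p1 in auto)
  also have "real p powr (log (real p) L) < real p powr real (e + 1)" using p1 re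
    by simp linarith
  ultimately show "L < real p ^ (nat \<lfloor>log (real p) L\<rfloor> + 1)" using pl unfolding e_def by simp
qed

lemma core:
  assumes p: "prime p" and I: "\<forall>i\<in>{1..n}. \<omega> (p, i) * of_nat p ^ (m + 1 + e) \<in> \<int>"
  shows "padic_abs p (of_nat p ^ m * Swalk \<omega> p n) / real p \<le> real p ^ e"
proof -
  define s where "s = (\<Sum>i\<in>{1..n}. \<omega> (p, i))"
  define P :: rat where "P = of_nat p ^ (m + 1 + e)"
  have "s * P = (\<Sum>i\<in>{1..n}. \<omega> (p, i) * P)" unfolding s_def by (simp add: sum_distrib_right)
  also have "\<dots> \<in> \<int>" using I unfolding P_def by (intro Ints_sum) auto
  finally have sP: "s * P \<in> \<int>" .
  have "frac s * P = s * P - of_int \<lfloor>s\<rfloor> * P" by (simp add: frac_def algebra_simps)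
  also have "\<dots> \<in> \<int>"
  proof -
    have "of_int \<lfloor>s\<rfloor> * P \<in> \<int>" unfolding P_def by (intro Ints_mult Ints_of_int Ints_power Ints_of_nat)
    thus ?thesis by (rule Ints_diff[OF sP])
  qed
  finally have fP: "frac s * P \<in> \<int>" .
  have "(of_nat p ^ m * Swalk \<omega> p n) * of_nat p ^ (e + 1) = frac s * P"
    unfolding Swalk_def s_def[symmetric] P_def by (simp add: power_add algebra_simps)
  hence "(of_nat p ^ m * Swalk \<omega> p n) * of_nat p ^ (e + 1) \<in> \<int>" using fP by simp
  hence "padic_abs p (of_nat p ^ m * Swalk \<omega> p n) \<le> real p ^ (e + 1)" by (rule padic_abs_le[OF p])
  moreover have "real p > 0" using p prime_gt_0_nat by simp
  ultimately show ?thesis by (simp add: divide_le_eq algebra_simps)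
qed



lemma sigma_summable:
  fixes \<sigma> :: "nat \<Rightarrow> real"
  assumes s0: "\<And>p. prime p \<Longrightarrow> \<sigma> p \<ge> 0" and ss: "\<sigma> summable_on {p. prime p}"
  shows "summable (\<lambda>n. if prime n then \<sigma> n else 0)" "\<And>n. (if prime n then \<sigma> n else 0) \<ge> 0"
proof -
  show nn: "\<And>n. (if prime n then \<sigma> n else 0) \<ge> 0" using s0 by simp
  have "(\<lambda>n. if prime n then \<sigma> n else 0) summable_on UNIV"
    using ss by (subst summable_on_cong_neutral[where T = "{p. prime p}" and g = \<sigma>]) auto
  thus "summable (\<lambda>n. if prime n then \<sigma> n else 0)"
    using summable_on_UNIV_nonneg_real_iff[OF nn] by simp
qed

lemma main_bound:
  fixes b T lam :: real and \<sigma> :: "nat \<Rightarrow> real"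
  assumes b: "b > 0"
    and s0: "\<And>p. prime p \<Longrightarrow> \<sigma> p \<ge> 0"
    and ss: "\<sigma> summable_on {p. prime p}"
    and T: "T > 0" and lam: "lam \<ge> 2"
  shows "1 - T * (\<Sum>n. if prime n then \<sigma> n else 0) * (lam / 2) powr (- b)
           \<le> measure (Omega b) (bounded_event b \<sigma> m T lam)"
proof -
  interpret P: prob_space "Omega b" by (rule prob_Omega)
  define L where "L = lam / 2"
  have L1: "L \<ge> 1" using lam unfolding L_def by simp
  define e where "e = (\<lambda>p::nat. nat \<lfloor>log (real p) L\<rfloor>)"
  define j where "j = (\<lambda>p. m + 1 + e p)"
  define N where "N = (\<lambda>p. nat \<lfloor>Dp b \<sigma> p * real p powr (real m * b) * T\<rfloor>)"
  define B where "B = (\<lambda>p i. {\<omega> \<in> space (Omega b). \<omega> (p, i) * of_nat p ^ j p \<notin> \<int>})"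
  define A where "A = (\<lambda>n. if prime n then (\<Union>i\<in>{1..N n}. B n i) else {})"
  define \<sigma>' where "\<sigma>' = (\<lambda>n. if prime n then \<sigma> n else 0)"
  define c where "c = T * L powr (- b)"
  have c0: "c \<ge> 0" unfolding c_def using T by simp
  have Bsets: "B p i \<in> sets (Omega b)" if "prime p" "i \<ge> 1" for p i
    unfolding B_def by (rule pred_coord) (use that in \<open>simp add: Idx_def\<close>)
  have Asets: "A n \<in> sets (Omega b)" for n
    unfolding A_def using Bsets by (auto intro!: sets.finite_UN)
  have Ameas: "measure (Omega b) (A n) \<le> c * \<sigma>' n" for n
  proof (cases "prime n")
    case False then show ?thesis unfolding A_def \<sigma>'_def by simp
  next
    case True
    define p where "p = n"
    have p: "prime p" using True p_def by simp
    have p1: "real p > 1" using p prime_gt_1_nat by simp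
    define r where "r = real p powr (- b)"
    have r0: "r \<ge> 0" unfolding r_def by simp
    have "measure (Omega b) (A p) \<le> (\<Sum>i\<in>{1..N p}. measure (Omega b) (B p i))"
      unfolding A_def using p Bsets by (simp add: P.finite_measure_subadditive_finite image_subset_iff)
    also have "\<dots> \<le> (\<Sum>i\<in>{1..N p}. r ^ j p)"
    proof (rule sum_mono)
      fix i assume i: "i \<in> {1..N p}"
      have "measure (Omega b) (B p i) = measure (Xpmf b p) {x. x * of_nat p ^ j p \<notin> \<int>}"
        unfolding B_def by (rule comp_meas) (use i p in \<open>simp add: Idx_def\<close>)
      also have "\<dots> \<le> r ^ j p" unfolding r_def by (rule X_tail[OF p b])
      finally show "measure (Omega b) (B p i) \<le> r ^ j p" .
    qed
    also have "\<dots> = real (N p) * r ^ j p" by simp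
    also have "\<dots> \<le> (Dp b \<sigma> p * real p powr (real m * b) * T) * r ^ j p"
    proof (rule mult_right_mono[OF _ zero_le_power[OF r0]])
      have "0 \<le> Dp b \<sigma> p * real p powr (real m * b) * T"
        using Dp_bounds(1)[of p b \<sigma>, OF p b s0[OF p]] T by simp
      thus "real (N p) \<le> Dp b \<sigma> p * real p powr (real m * b) * T"
        unfolding N_def by linarith
    qed
    also have "\<dots> = Dp b \<sigma> p * T * (real p powr (real m * b) * r ^ m) * r ^ (e p + 1)"
      unfolding j_def by (simp add: power_add algebra_simps)
    also have "real p powr (real m * b) * r ^ m = 1"
      unfolding r_def Kf_eq[OF p1, symmetric] using p1 by (simp add: powr_add[symmetric])
    also have "r ^ (e p + 1) \<le> L powr (- b)"
    proof -
      have "r ^ (e p + 1) = real p powr (- (real (e p + 1) * b))"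
        unfolding r_def Kf_eq[OF p1] ..
      also have "\<dots> = (real p powr real (e p + 1)) powr (- b)" by (simp add: powr_powr)
      also have "\<dots> = (real p ^ (e p + 1)) powr (- b)" by (subst powr_realpow) (use p1 in auto)
      also have "\<dots> \<le> L powr (- b)"
        by (rule powr_mono2') (use b L1 exp_choice(2)[OF p1 L1] e_def in auto)
      finally show ?thesis .
    qed
    hence "Dp b \<sigma> p * T * 1 * r ^ (e p + 1) \<le> \<sigma> p * T * 1 * L powr (- b)"
      using Dp_bounds[of p b \<sigma>, OF p b s0[OF p]] T r0 by (intro mult_mono) auto
    finally show ?thesis unfolding c_def \<sigma>'_def p_def using True by (simp add: algebra_simps)
  qed
  have sum\<sigma>: "summable \<sigma>'" "\<And>n. \<sigma>' n \<ge> 0" unfolding \<sigma>'_def using sigma_summable[OF s0 ss] by auto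
  have summA: "summable (\<lambda>n. measure (Omega b) (A n))"
    by (rule summable_comparison_test'[where g = "\<lambda>n. c * \<sigma>' n"])
       (use Ameas sum\<sigma> in \<open>auto intro: summable_mult\<close>)
  have "measure (Omega b) (\<Union>n. A n) \<le> (\<Sum>n. measure (Omega b) (A n))"
    by (rule P.finite_measure_subadditive_countably) (use Asets summA in auto)
  also have "\<dots> \<le> (\<Sum>n. c * \<sigma>' n)"
    by (rule suminf_le) (use Ameas summA sum\<sigma> in \<open>auto intro: summable_mult\<close>)
  also have "\<dots> = c * (\<Sum>n. \<sigma>' n)" using sum\<sigma> by (simp add: suminf_mult)
  finally have Ubound: "measure (Omega b) (\<Union>n. A n) \<le> c * (\<Sum>n. \<sigma>' n)" .
  have Usets: "(\<Union>n. A n) \<in> sets (Omega b)" using Asets by auto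
  have incl: "space (Omega b) - (\<Union>n. A n) \<subseteq> bounded_event b \<sigma> m T lam"
  proof
    fix \<omega> assume \<omega>: "\<omega> \<in> space (Omega b) - (\<Union>n. A n)"
    have le: "(SUP s\<in>{0..T}. adelic_abs (\<lambda>p. path b \<sigma> m \<omega> p s)) \<le> ereal L"
    proof (rule SUP_least)
      fix s assume s: "s \<in> {0..T}"
      show "adelic_abs (\<lambda>p. path b \<sigma> m \<omega> p s) \<le> ereal L"
        unfolding adelic_abs_def
      proof (rule SUP_least)
        fix p :: nat assume "p \<in> {p. prime p}"
        hence p: "prime p" by simp
        have p1: "real p > 1" using p prime_gt_1_nat by simp
        define n where "n = nat \<lfloor>Dp b \<sigma> p * real p powr (real m * b) * s\<rfloor>"
        have "Dp b \<sigma> p * real p powr (real m * b) * s \<le> Dp b \<sigma> p * real p powr (real m * b) * T"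
          using s Dp_bounds(1)[of p b \<sigma>, OF p b s0[OF p]] by (intro mult_left_mono) auto
        hence nN: "n \<le> N p" unfolding n_def N_def by (intro nat_mono floor_mono)
        have I: "\<forall>i\<in>{1..n}. \<omega> (p, i) * of_nat p ^ (m + 1 + e p) \<in> \<int>"
        proof
          fix i assume i: "i \<in> {1..n}"
          have "\<omega> \<notin> A p" using \<omega> by auto
          hence "\<omega> \<notin> B p i" using i nN p unfolding A_def by auto
          thus "\<omega> (p, i) * of_nat p ^ (m + 1 + e p) \<in> \<int>" using \<omega> unfolding B_def j_def by auto
        qed
        have "padic_abs p (path b \<sigma> m \<omega> p s) / real p \<le> real p ^ e p"
          unfolding path_def n_def[symmetric] by (rule core[OF p I])
        also have "\<dots> \<le> L" unfolding e_def by (rule exp_choice(1)[OF p1 L1])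
        finally show "ereal (padic_abs p (path b \<sigma> m \<omega> p s) / real p) \<le> ereal L" by simp
      qed
    qed
    also have "ereal L < ereal lam" using lam unfolding L_def by simp
    finally show "\<omega> \<in> bounded_event b \<sigma> m T lam" using \<omega> unfolding bounded_event_def by auto
  qed
  have "1 - c * (\<Sum>n. \<sigma>' n) \<le> 1 - measure (Omega b) (\<Union>n. A n)" using Ubound by simp
  also have "\<dots> = measure (Omega b) (space (Omega b) - (\<Union>n. A n))"
    using P.prob_compl[OF Usets] by simp
  also have "\<dots> \<le> measure (Omega b) (bounded_event b \<sigma> m T lam)"
    by (rule P.finite_measure_mono[OF incl bounded_event_sets])
  finally show ?thesis unfolding c_def \<sigma>'_def L_def by (simp add: algebra_simps)
qed



theorem proposition4:
  fixes b T :: real and \<sigma> :: "nat \<Rightarrow> real"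
  assumes "b > 0"
    and "\<And>p. prime p \<Longrightarrow> \<sigma> p \<ge> 0"
    and "\<sigma> summable_on {p. prime p}"
    and "T > 0"
  shows "((\<lambda>lam. liminf (\<lambda>m. ereal (measure (Omega b) (bounded_event b \<sigma> m T lam))))
           \<longlongrightarrow> 1) at_top"
proof -
  interpret P: prob_space "Omega b" by (rule prob_Omega)
  define K where "K = T * (\<Sum>n. if prime n then \<sigma> n else 0)"
  define lo where "lo = (\<lambda>lam::real. ereal (1 - K * (lam / 2) powr (- b)))"
  have ev1: "eventually (\<lambda>lam. lo lam \<le> liminf (\<lambda>m. ereal (measure (Omega b) (bounded_event b \<sigma> m T lam)))) at_top"
    using eventually_ge_at_top[of 2]
  proof eventually_elim
    case (elim lam)
    show ?case unfolding lo_def K_def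
      by (rule Liminf_bounded) (use main_bound[OF assms(1,2,3,4) elim] in \<open>auto simp: mult.assoc\<close>)
  qed
  have ev2: "eventually (\<lambda>lam. liminf (\<lambda>m. ereal (measure (Omega b) (bounded_event b \<sigma> m T lam))) \<le> 1) at_top"
  proof (rule always_eventually, rule allI)
    fix lam
    have "liminf (\<lambda>m. ereal (measure (Omega b) (bounded_event b \<sigma> m T lam)))
       \<le> limsup (\<lambda>m. ereal (measure (Omega b) (bounded_event b \<sigma> m T lam)))"
      by (rule Liminf_le_Limsup) simp
    also have "\<dots> \<le> 1" by (rule Limsup_bounded) (simp add: P.prob_le_1)
    finally show "liminf (\<lambda>m. ereal (measure (Omega b) (bounded_event b \<sigma> m T lam))) \<le> 1" .
  qed
  have "filterlim (\<lambda>lam::real. lam / 2) at_top at_top"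
  proof -
    have e: "(\<lambda>lam::real. lam / 2) = (\<lambda>lam. (1/2) * lam)" by auto
    show ?thesis unfolding e
      by (rule filterlim_tendsto_pos_mult_at_top[OF tendsto_const _ filterlim_ident]) simp
  qed
  hence "((\<lambda>lam. (lam / 2) powr (- b)) \<longlongrightarrow> 0) at_top"
    by (rule tendsto_neg_powr[rotated]) (use assms(1) in simp)
  hence "((\<lambda>lam. 1 - K * (lam / 2) powr (- b)) \<longlongrightarrow> 1 - K * 0) at_top"
    by (intro tendsto_intros)
  hence lim: "(lo \<longlongrightarrow> 1) at_top" unfolding lo_def by (simp add: one_ereal_def)
  show ?thesis by (rule tendsto_sandwich[OF ev1 ev2 lim tendsto_const])
qed

end
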